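(* Let $n\ne0,-1$, let $r$ be a constant and $\xi(x)$ a nonvanishing smooth function, and set $p=4(1+\frac1n)^2r^2$. Then for arbitrary constants $c_1,c_2$, the function $u(t,x)=\varphi(\omega)|\xi|^{\frac1{2n+2}}\exp\big(\frac rn\int\frac{dx}{\xi}\big)$, $\omega=t-\int\frac{dx}{\xi}$, where $\varphi$ is defined implicitly by $$\int\frac{n(\varphi^n-1)}{2r\varphi^{n+1}+c_1}\,d\varphi=\omega+c_2,$$ is a solution of $$|\xi|^{-\frac{3n+4}{2n+2}}\exp\Big(r\int\frac{dx}{\xi}\Big)u_{tt}-(u^nu_x)_x-\frac{\xi_x^2-2\xi\xi_{xx}-p}{4(n+1)\xi^2}u^{n+1}=0.$$
   Context: Here $\int dx/\xi$ denotes a fixed antiderivative of $1/\xi$. *)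

theory Defs
  imports "HOL-Analysis.Analysis"
begin

end

theory Submission
  imports Defs
begin


lemma phi_deriv:
  fixes n r c1 c2 w :: real and \<phi> G :: "real \<Rightarrow> real" and J :: "real set"
  assumes n0: "n \<noteq> 0" and J: "open J" and w: "w \<in> J"
    and pd: "\<phi> differentiable (at w)"
    and dn: "2 * r * \<phi> w powr (n + 1) + c1 \<noteq> 0"
    and Gd: "(G has_real_derivative n * (\<phi> w powr n - 1) / (2 * r * \<phi> w powr (n + 1) + c1)) (at (\<phi> w))"
    and imp: "\<forall>w\<in>J. G (\<phi> w) = w + c2"
  shows "\<phi> w powr n \<noteq> 1 \<and> (\<phi> has_real_derivative (2 * r * \<phi> w powr (n + 1) + c1) / (n * (\<phi> w powr n - 1))) (at w)"
proof -
  have D: "(\<phi> has_real_derivative deriv \<phi> w) (at w)"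
    using pd DERIV_deriv_iff_real_differentiable by blast
  have C1: "((\<lambda>v. G (\<phi> v)) has_real_derivative n * (\<phi> w powr n - 1) / (2 * r * \<phi> w powr (n + 1) + c1) * deriv \<phi> w) (at w)"
    by (rule DERIV_chain2[OF Gd D])
  have C2: "((\<lambda>v. G (\<phi> v)) has_real_derivative 1) (at w)"
  proof (rule has_field_derivative_transform_within_open[OF _ J w])
    show "((\<lambda>v. v + c2) has_real_derivative 1) (at w)"
      by (auto intro!: derivative_eq_intros)
    show "\<And>v. v \<in> J \<Longrightarrow> v + c2 = G (\<phi> v)" using imp by simp
  qed
  have E: "n * (\<phi> w powr n - 1) / (2 * r * \<phi> w powr (n + 1) + c1) * deriv \<phi> w = 1"
    using DERIV_unique[OF C1 C2] .
  then have ne: "\<phi> w powr n \<noteq> 1" by auto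
  have "deriv \<phi> w = (2 * r * \<phi> w powr (n + 1) + c1) / (n * (\<phi> w powr n - 1))"
    using E ne n0 dn by (auto simp: field_simps)
  with D ne show ?thesis by simp
qed



lemma g_deriv:
  fixes n r c1 y :: real
  assumes y: "y > 0" and ne: "y powr n \<noteq> 1" and n0: "n \<noteq> 0"
  shows "((\<lambda>y. (2 * r * y powr (n + 1) + c1) / (n * (y powr n - 1))) has_real_derivative
     (2*r*(n+1)*y powr n * (n*(y powr n - 1)) - (2*r*y powr (n+1)+c1)*(n*n*y powr n / y)) / (n*(y powr n - 1))^2) (at y)"
  using y ne n0
  by (auto intro!: derivative_eq_intros simp: powr_diff power2_eq_square field_simps)

lemma lnsq_deriv:
  fixes f :: "real \<Rightarrow> real"
  assumes "(f has_real_derivative f') (at y)" "f y \<noteq> 0"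
  shows "((\<lambda>y. ln ((f y)^2) / 2) has_real_derivative f' / f y) (at y)"
proof -
  have "0 < f y * f y" using assms(2) by (auto simp: zero_less_mult_iff linorder_neq_iff)
  then show ?thesis using assms
    by (auto intro!: derivative_eq_intros simp: power2_eq_square field_simps)
qed


lemma ode0:
  fixes n r c1 Pv D :: real
  assumes n0: "n \<noteq> 0" and Pv: "Pv > 0" and d: "D \<noteq> 0"
  shows "(- D) * (((2*r*(n+1)*(D+1) * (n*D) - (2*r*(Pv*(D+1))+c1)*(n*n*(D+1) / Pv)) / (n*D)^2) * ((2*r*(Pv*(D+1))+c1)/(n*D))) + 2 * (r*(n+1)/n) * (D+1) * ((2*r*(Pv*(D+1))+c1)/(n*D)) - n * (D+1) * ((2*r*(Pv*(D+1))+c1)/(n*D)) * ((2*r*(Pv*(D+1))+c1)/(n*D)) / Pv = 0"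
  using n0 Pv d
  apply (simp add: field_simps power2_eq_square)
  done

lemma alg0:
  fixes n r X0 X1 X2 Pv Pn G G' K E b :: real
  assumes n0: "n \<noteq> 0" and n1: "b \<noteq> 0" and X0: "X0 \<noteq> 0" and Pv: "Pv > 0" and b: "b = n + 1"
  shows "(K/X0^2)*(G'*(G*(1-0))*(1-0)*E) - (Pn*K*(Pv*(E*((1/(2*b))*((X2*X0-X1*X1)/(X0*X0)) + r/n*((0*X0-1*X1)/(X0*X0))) + E*((1/(2*b)) * (X1 / X0) + r / n * (1 / X0))*((1/(2*b))*(X1/X0)+r/n*(1/X0))) + G*(0-1/X0)*(E*((1/(2*b))*(X1/X0)+r/n*(1/X0))) + (G*(0-1/X0)*(E*((1/(2*b)) * (X1 / X0) + r / n * (1 / X0))) + (G*(0-(0*X0-1*X1)/(X0*X0)) + G'*(G*(0-1/X0))*(0-1/X0))*E)) + Pn*K*(n*(1/Pv*(G*(0-1/X0)) + ((1/(2*b)) * (X1 / X0) + r / n * (1 / X0))))*(Pv*(E*((1/(2*b))*(X1/X0)+r/n*(1/X0))) + G*(0-1/X0)*E)) - ((X1^2-2*X0*X2-(4 * (b / n)^2 * r^2))/(4*b*X0^2))*(Pv*Pn*E*K)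
     = (K*E/X0^2) * ((1 - Pn) * (G' * G) + 2 * (r*b/n) * Pn * G - n * Pn * G * G / Pv)"
  using n0 n1 X0 Pv
  apply (simp add: field_simps power2_eq_square)
  apply (simp add: b algebra_simps)
  done

lemma alg:
  fixes n r c1 p a X0 X1 X2 Pv Pn G G' K E Lp :: real
  assumes n0: "n \<noteq> 0" and n1: "n \<noteq> -1" and X0: "X0 \<noteq> 0" and Pv: "Pv > 0" and Pn1: "Pn \<noteq> 1"
    and p: "p = 4 * (1 + 1 / n)\<^sup>2 * r\<^sup>2" and a: "a = 1/(2*n+2)"
    and Lp: "Lp = a * (X1 / X0) + r / n * (1 / X0)"
    and Pn: "Pn = Pv powr n"
    and G: "G = (2 * r * Pv powr (n + 1) + c1) / (n * (Pv powr n - 1))"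
    and G': "G' = (2*r*(n+1)*Pv powr n * (n*(Pv powr n - 1)) - (2*r*Pv powr (n+1)+c1)*(n*n*Pv powr n / Pv)) / (n*(Pv powr n - 1))^2"
  shows "(K/X0^2)*(G'*(G*(1-0))*(1-0)*E) - (Pn*K*(Pv*(E*(a*((X2*X0-X1*X1)/(X0*X0)) + r/n*((0*X0-1*X1)/(X0*X0))) + E*Lp*(a*(X1/X0)+r/n*(1/X0))) + G*(0-1/X0)*(E*(a*(X1/X0)+r/n*(1/X0))) + (G*(0-1/X0)*(E*Lp) + (G*(0-(0*X0-1*X1)/(X0*X0)) + G'*(G*(0-1/X0))*(0-1/X0))*E)) + Pn*K*(n*(1/Pv*(G*(0-1/X0)) + Lp))*(Pv*(E*(a*(X1/X0)+r/n*(1/X0))) + G*(0-1/X0)*E)) - ((X1^2-2*X0*X2-p)/(4*(n+1)*X0^2))*(Pv*Pn*E*K) = 0"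
proof -
  have b0: "n + 1 \<noteq> 0" using n1 by (auto simp: add_eq_0_iff)
  have pp: "Pv powr (n + 1) = Pv * Pn" using Pv Pn by (simp add: powr_add)
  have Gx: "G = (2*r*(Pv*(Pn - 1 + 1))+c1)/(n*(Pn - 1))" using G pp Pn by simp
  have G'x: "G' = ((2*r*(n+1)*(Pn - 1 + 1) * (n*(Pn - 1)) - (2*r*(Pv*(Pn - 1 + 1))+c1)*(n*n*(Pn - 1 + 1) / Pv)) / (n*(Pn - 1))^2)"
    using G' pp Pn by simp
  have od: "(- (Pn - 1)) * (G' * G) + 2 * (r*(n+1)/n) * (Pn - 1 + 1) * G - n * (Pn - 1 + 1) * G * G / Pv = 0"
    unfolding Gx G'x by (rule ode0[OF n0 Pv]) (use Pn1 in simp)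
  have od2: "(1 - Pn) * (G' * G) + 2 * (r*(n+1)/n) * Pn * G - n * Pn * G * G / Pv = 0"
    using od by simp
  have aa: "a = 1/(2*(n+1))" using a by (simp add: algebra_simps)
  have pb: "p = 4 * ((n+1) / n)^2 * r^2" using p n0 by (simp add: field_simps)
  have "(K/X0^2)*(G'*(G*(1-0))*(1-0)*E) - (Pn*K*(Pv*(E*(a*((X2*X0-X1*X1)/(X0*X0)) + r/n*((0*X0-1*X1)/(X0*X0))) + E*Lp*(a*(X1/X0)+r/n*(1/X0))) + G*(0-1/X0)*(E*(a*(X1/X0)+r/n*(1/X0))) + (G*(0-1/X0)*(E*Lp) + (G*(0-(0*X0-1*X1)/(X0*X0)) + G'*(G*(0-1/X0))*(0-1/X0))*E)) + Pn*K*(n*(1/Pv*(G*(0-1/X0)) + Lp))*(Pv*(E*(a*(X1/X0)+r/n*(1/X0))) + G*(0-1/X0)*E)) - ((X1^2-2*X0*X2-p)/(4*(n+1)*X0^2))*(Pv*Pn*E*K)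
     = (K*E/X0^2) * ((1 - Pn) * (G' * G) + 2 * (r*(n+1)/n) * Pn * G - n * Pn * G * G / Pv)"
    unfolding Lp aa pb
    by (rule alg0[where b="n+1", OF n0 b0 X0 Pv refl])
  then show ?thesis using od2 by simp
qed
theorem mainTheorem7:
  fixes n r c1 c2 p :: real
    and \<xi> \<xi>' \<xi>'' F G \<phi> :: "real \<Rightarrow> real"
    and X J :: "real set"
    and u :: "real \<Rightarrow> real \<Rightarrow> real"
  assumes n0: "n \<noteq> 0" and n1: "n \<noteq> -1"
    and X_open: "open X"
    and xi_nz: "\<forall>x\<in>X. \<xi> x \<noteq> 0"
    and xi_d1: "\<forall>x\<in>X. (\<xi> has_real_derivative \<xi>' x) (at x)"
    and xi_d2: "\<forall>x\<in>X. (\<xi>' has_real_derivative \<xi>'' x) (at x)"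
    and F_antider: "\<forall>x\<in>X. (F has_real_derivative 1 / \<xi> x) (at x)"
    and p_def: "p = 4 * (1 + 1 / n)\<^sup>2 * r\<^sup>2"
    and J_open: "open J"
    and phi_pos: "\<forall>w\<in>J. \<phi> w > 0"
    and phi_diff: "\<forall>w\<in>J. \<phi> differentiable (at w)"
    and denom_nz: "\<forall>w\<in>J. 2 * r * \<phi> w powr (n + 1) + c1 \<noteq> 0"
    and G_antider: "\<forall>w\<in>J. (G has_real_derivative
                        n * (\<phi> w powr n - 1) / (2 * r * \<phi> w powr (n + 1) + c1)) (at (\<phi> w))"
    and phi_implicit: "\<forall>w\<in>J. G (\<phi> w) = w + c2"
    and u_def: "u = (\<lambda>t x. \<phi> (t - F x) * \<bar>\<xi> x\<bar> powr (1 / (2 * n + 2)) * exp (r / n * F x))"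
  shows "\<forall>t x. x \<in> X \<and> t - F x \<in> J \<longrightarrow>
           (\<lambda>s. u s x) differentiable (at t) \<and>
           (\<lambda>s. deriv (\<lambda>s'. u s' x) s) differentiable (at t) \<and>
           (\<lambda>y. u t y) differentiable (at x) \<and>
           (\<lambda>y. u t y powr n * deriv (\<lambda>z. u t z) y) differentiable (at x) \<and>
           \<bar>\<xi> x\<bar> powr (- (3 * n + 4) / (2 * n + 2)) * exp (r * F x)
              * deriv (\<lambda>s. deriv (\<lambda>s'. u s' x) s) t
           - deriv (\<lambda>y. u t y powr n * deriv (\<lambda>z. u t z) y) x
           - ((\<xi>' x)\<^sup>2 - 2 * \<xi> x * \<xi>'' x - p) / (4 * (n + 1) * (\<xi> x)\<^sup>2) * u t x powr (n + 1) = 0"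
proof (intro allI impI, elim conjE)
  fix t x assume xX: "x \<in> X" and tJ: "t - F x \<in> J"
  define g where "g = (\<lambda>y. (2 * r * y powr (n + 1) + c1) / (n * (y powr n - 1)))"
  define g' where "g' = (\<lambda>y::real. (2*r*(n+1)*y powr n * (n*(y powr n - 1)) - (2*r*y powr (n+1)+c1)*(n*n*y powr n / y)) / (n*(y powr n - 1))^2)"
  have phD: "\<And>w. w \<in> J \<Longrightarrow> \<phi> w powr n \<noteq> 1 \<and> (\<phi> has_real_derivative g (\<phi> w)) (at w)"
    unfolding g_def
    by (rule phi_deriv[OF n0 J_open _ phi_diff[rule_format] denom_nz[rule_format] G_antider[rule_format] phi_implicit])
  have gD: "\<And>w. w \<in> J \<Longrightarrow> (g has_real_derivative g' (\<phi> w)) (at (\<phi> w))"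
    unfolding g_def g'_def using g_deriv phD phi_pos n0 by blast
  define a where "a = 1/(2*n+2)"
  define Lf where "Lf = (\<lambda>y. a * (ln ((\<xi> y)^2)/2) + r/n * F y)"
  have uY: "\<And>s y. y \<in> X \<Longrightarrow> u s y = \<phi> (s - F y) * exp (Lf y)"
  proof -
    fix s y assume y: "y \<in> X"
    have nz: "\<xi> y \<noteq> 0" using xi_nz y by blast
    have "ln ((\<xi> y)^2) = 2 * ln \<bar>\<xi> y\<bar>"
      using ln_realpow[of "\<bar>\<xi> y\<bar>" 2] nz by simp
    then have "\<bar>\<xi> y\<bar> powr a = exp (a * (ln ((\<xi> y)^2)/2))"
      using nz by (simp add: powr_def)
    then show "u s y = \<phi> (s - F y) * exp (Lf y)"
      unfolding u_def Lf_def a_def by (simp add: exp_add)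
  qed
  have Fc: "continuous_on X F"
    by (rule continuous_at_imp_continuous_on) (use F_antider DERIV_isCont in blast)
  define Y where "Y = (\<lambda>y. t - F y) -` J \<inter> X"
  have Yo: "open Y"
    using continuous_on_open_vimage[OF X_open, of "\<lambda>y. t - F y"] continuous_on_diff[OF continuous_on_const Fc] J_open
    unfolding Y_def by blast
  have xY: "x \<in> Y" using xX tJ Y_def by auto
  define C where "C = exp (Lf x)"
  define T where "T = (\<lambda>s. s - F x) -` J"
  have To: "open T"
    using continuous_on_open_vimage[OF open_UNIV, of "\<lambda>s. s - F x"] J_open unfolding T_def
    by (auto intro!: continuous_intros)
  have tT: "t \<in> T" using tJ T_def by auto
  have dt: "\<And>s. s \<in> T \<Longrightarrow> ((\<lambda>s. u s x) has_real_derivative g (\<phi> (s - F x)) * (1 - 0) * C) (at s)"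
  proof -
    fix s assume s: "s \<in> T"
    have "((\<lambda>s. \<phi> (s - F x) * C) has_real_derivative g (\<phi> (s - F x)) * (1 - 0) * C) (at s)"
      using s unfolding T_def
      by (intro DERIV_cmult_right DERIV_chain2[OF conjunct2[OF phD] DERIV_diff[OF DERIV_ident DERIV_const]]) auto
    then show "((\<lambda>s. u s x) has_real_derivative g (\<phi> (s - F x)) * (1 - 0) * C) (at s)"
      using uY[OF xX] C_def by simp
  qed
  have dteq: "\<And>s. s \<in> T \<Longrightarrow> deriv (\<lambda>s'. u s' x) s = g (\<phi> (s - F x)) * (1 - 0) * C"
    using dt DERIV_imp_deriv by blast
  have dtt: "((\<lambda>s. deriv (\<lambda>s'. u s' x) s) has_real_derivative g' (\<phi> (t - F x)) * (g (\<phi> (t - F x)) * (1 - 0)) * (1 - 0) * C) (at t)"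
  proof (rule has_field_derivative_transform_within_open[OF _ To tT])
    show "((\<lambda>s. g (\<phi> (s - F x)) * (1 - 0) * C) has_real_derivative g' (\<phi> (t - F x)) * (g (\<phi> (t - F x)) * (1 - 0)) * (1 - 0) * C) (at t)"
      by (intro DERIV_cmult_right DERIV_chain2[OF gD DERIV_chain2[OF conjunct2[OF phD] DERIV_diff[OF DERIV_ident DERIV_const]]] tJ)
    show "\<And>s. s \<in> T \<Longrightarrow> g (\<phi> (s - F x)) * (1 - 0) * C = deriv (\<lambda>s'. u s' x) s"
      using dteq by simp
  qed
  define P where "P = (\<lambda>y. \<phi> (t - F y))"
  have PD: "\<And>y. y \<in> Y \<Longrightarrow> (P has_real_derivative g (P y) * (0 - 1 / \<xi> y)) (at y)"
    unfolding P_def Y_def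
    by (rule DERIV_chain2[OF conjunct2[OF phD] DERIV_diff[OF DERIV_const F_antider[rule_format]]]) auto
  have Ppos: "\<And>y. y \<in> Y \<Longrightarrow> P y > 0" unfolding P_def Y_def using phi_pos by auto
  define Lp where "Lp = (\<lambda>y. a * (\<xi>' y / \<xi> y) + r/n * (1 / \<xi> y))"
  have LD: "\<And>y. y \<in> X \<Longrightarrow> (Lf has_real_derivative Lp y) (at y)"
    unfolding Lf_def Lp_def
    by (intro DERIV_add DERIV_cmult lnsq_deriv) (use xi_d1 xi_nz F_antider in auto)
  define ux where "ux = (\<lambda>y. P y * (exp (Lf y) * Lp y) + g (P y) * (0 - 1 / \<xi> y) * exp (Lf y))"
  have dx: "\<And>y. y \<in> Y \<Longrightarrow> ((\<lambda>y. u t y) has_real_derivative ux y) (at y)"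
  proof -
    fix y assume y: "y \<in> Y"
    have "((\<lambda>y. P y * exp (Lf y)) has_real_derivative ux y) (at y)"
      unfolding ux_def using y Y_def
      by (intro DERIV_mult'[OF PD[OF y] DERIV_chain2[OF DERIV_exp LD]]) auto
    then show "((\<lambda>y. u t y) has_real_derivative ux y) (at y)"
      by (rule has_field_derivative_transform_within_open[OF _ Yo y])
         (auto simp: Y_def uY P_def)
  qed
  have dxeq: "\<And>y. y \<in> Y \<Longrightarrow> deriv (\<lambda>y. u t y) y = ux y"
    using dx DERIV_imp_deriv by blast
  have upow: "\<And>s y. y \<in> Y \<Longrightarrow> u t y powr s = exp (s * (ln (P y) + Lf y))"
  proof -
    fix s y assume y: "y \<in> Y"
    have "u t y = P y * exp (Lf y)" using y Y_def uY P_def by auto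
    then show "u t y powr s = exp (s * (ln (P y) + Lf y))"
      using Ppos[OF y] by (simp add: powr_def ln_mult)
  qed
  have xid: "((\<lambda>y. 0 - 1 / \<xi> y) has_real_derivative (0 - (0 * \<xi> x - 1 * \<xi>' x) / (\<xi> x * \<xi> x))) (at x)"
    using xX xi_d1 xi_nz by (intro DERIV_diff DERIV_const DERIV_divide) auto
  note Lpd = DERIV_add[OF DERIV_cmult[OF DERIV_divide[OF xi_d2[rule_format, OF xX] xi_d1[rule_format, OF xX]]]
      DERIV_cmult[OF DERIV_divide[OF DERIV_const[where k="1::real"] xi_d1[rule_format, OF xX]]], of a "r/n"]
  have gDx: "(g has_real_derivative g' (P x)) (at (P x))" using gD[OF tJ] P_def by simp
  note uxd = DERIV_add[OF DERIV_mult'[OF PD[OF xY] DERIV_mult'[OF DERIV_chain2[OF DERIV_exp LD[OF xX]] Lpd]]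
     DERIV_mult'[OF DERIV_mult'[OF DERIV_chain2[OF gDx PD[OF xY]] xid] DERIV_chain2[OF DERIV_exp LD[OF xX]]]]
  define Phi where "Phi = (\<lambda>y. exp (n * (ln (P y) + Lf y)) * ux y)"
  note PhiD0 = DERIV_mult'[OF DERIV_chain2[OF DERIV_exp DERIV_cmult[OF DERIV_add[OF DERIV_chain2[OF DERIV_ln_divide[OF Ppos[OF xY]] PD[OF xY]] LD[OF xX]]]] uxd, of n]
  have flux: "\<And>y. y \<in> Y \<Longrightarrow> Phi y = u t y powr n * deriv (\<lambda>z. u t z) y"
    using upow dxeq Phi_def by simp
  have xnz: "\<xi> x \<noteq> 0" using xi_nz xX by blast
  have flux2: "\<And>y. y \<in> Y \<Longrightarrow> exp (n * (ln (P y) + Lf y)) * (P y * (exp (Lf y) * (a * (\<xi>' y / \<xi> y) + r / n * (1 / \<xi> y))) + g (P y) * (0 - 1 / \<xi> y) * exp (Lf y)) = u t y powr n * deriv (\<lambda>z. u t z) y"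
    using flux unfolding Phi_def ux_def Lp_def by simp
  note fluxD = has_field_derivative_transform_within_open[OF PhiD0[OF xnz xnz] Yo xY flux2]
  have Yrefl: "\<And>x. x \<in> Y \<Longrightarrow> x \<in> Y" by simp
  note fluxD = fluxD[OF Yrefl]
  show "(\<lambda>s. u s x) differentiable (at t) \<and>
           (\<lambda>s. deriv (\<lambda>s'. u s' x) s) differentiable (at t) \<and>
           (\<lambda>y. u t y) differentiable (at x) \<and>
           (\<lambda>y. u t y powr n * deriv (\<lambda>z. u t z) y) differentiable (at x) \<and>
           \<bar>\<xi> x\<bar> powr (- (3 * n + 4) / (2 * n + 2)) * exp (r * F x)
              * deriv (\<lambda>s. deriv (\<lambda>s'. u s' x) s) t
           - deriv (\<lambda>y. u t y powr n * deriv (\<lambda>z. u t z) y) x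
           - ((\<xi>' x)\<^sup>2 - 2 * \<xi> x * \<xi>'' x - p) / (4 * (n + 1) * (\<xi> x)\<^sup>2) * u t x powr (n + 1) = 0"
  proof (intro conjI)
    show "(\<lambda>s. u s x) differentiable (at t)" by (rule real_differentiable_def[THEN iffD2, OF exI, OF dt[OF tT]])
    show "(\<lambda>s. deriv (\<lambda>s'. u s' x) s) differentiable (at t)" by (rule real_differentiable_def[THEN iffD2, OF exI, OF dtt])
    show "(\<lambda>y. u t y) differentiable (at x)" by (rule real_differentiable_def[THEN iffD2, OF exI, OF dx[OF xY]])
    show "(\<lambda>y. u t y powr n * deriv (\<lambda>z. u t z) y) differentiable (at x)" by (rule real_differentiable_def[THEN iffD2, OF exI, OF fluxD])
    note e1 = DERIV_imp_deriv[OF dtt] and e2 = DERIV_imp_deriv[OF fluxD] and e3 = upow[OF xY, of "n+1"]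
    show "\<bar>\<xi> x\<bar> powr (- (3 * n + 4) / (2 * n + 2)) * exp (r * F x)
              * deriv (\<lambda>s. deriv (\<lambda>s'. u s' x) s) t
           - deriv (\<lambda>y. u t y powr n * deriv (\<lambda>z. u t z) y) x
           - ((\<xi>' x)\<^sup>2 - 2 * \<xi> x * \<xi>'' x - p) / (4 * (n + 1) * (\<xi> x)\<^sup>2) * u t x powr (n + 1) = 0"
    proof -
      have hP: "\<phi> (t - F x) = P x" by (simp add: P_def)
      have LpX: "Lp x = a * (\<xi>' x / \<xi> x) + r / n * (1 / \<xi> x)" by (simp add: Lp_def)
      have Px: "P x > 0" using Ppos[OF xY] .
      define l where "l = ln \<bar>\<xi> x\<bar>"
      have ll: "ln ((\<xi> x)^2) / 2 = l" using ln_realpow[of "\<bar>\<xi> x\<bar>" 2] xnz l_def by simp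
      have Lfx: "Lf x = a * l + r / n * F x" using ll Lf_def by simp
      have sq: "(\<xi> x)^2 = exp (2 * l)"
      proof -
        have "exp (2 * l) = exp l ^ 2" by (simp add: exp_of_nat_mult[symmetric] mult.commute)
        also have "exp l = \<bar>\<xi> x\<bar>" using xnz l_def by simp
        finally show ?thesis by simp
      qed
      have b0: "2 * n + 2 \<noteq> 0" using n1 by (auto simp: add_eq_0_iff)
      have zz: "- (3 * n + 4) / (2 * n + 2) = n * a - 2" unfolding a_def using b0 by (simp add: field_simps)
      have h1: "\<bar>\<xi> x\<bar> powr (- (3 * n + 4) / (2 * n + 2)) * exp (r * F x) = exp (n * Lf x) / (\<xi> x)^2"
      proof -
        have "\<bar>\<xi> x\<bar> powr (- (3 * n + 4) / (2 * n + 2)) = exp ((- (3 * n + 4) / (2 * n + 2)) * l)"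
          using xnz by (simp add: powr_def l_def)
        then have "\<bar>\<xi> x\<bar> powr (- (3 * n + 4) / (2 * n + 2)) = exp ((n * a - 2) * l)"
          by (simp only: zz)
        then show ?thesis unfolding sq Lfx using n0
          by (simp add: exp_add[symmetric] exp_diff[symmetric] algebra_simps)
      qed
      have h2: "exp (n * (ln (P x) + Lf x)) = P x powr n * exp (n * Lf x)"
        using Px by (simp add: powr_def distrib_left exp_add)
      have h3: "exp ((n + 1) * (ln (P x) + Lf x)) = P x * P x powr n * exp (Lf x) * exp (n * Lf x)"
        using Px by (simp add: powr_def algebra_simps exp_add)
      show ?thesis
        unfolding e1 e3 apply (subst e2, simp) unfolding hP C_def h1 h2 h3
        apply (rule alg[where ?c1.0=c1, OF n0 n1 xnz Px _ p_def a_def LpX refl])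
          apply (use phD[OF tJ] hP in simp)
         apply (simp add: g_def)
        apply (simp add: g'_def)
        done
    qed
  qed
qed


end
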